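(* Let $a,b,c\ge 0$, $r\ge 0$, and for $t\in[0,1]$ let $$r_{h.d.}(t)=\min\big\{t\max(\alpha,\gamma)+(1-t)\gamma,\ t\gamma+(1-t)\max(\beta,\gamma)\big\}.$$ The DMT achieved by static QMF on the half-duplex $(a,b,c)$-relay channel, $$d_{QMF}(r)=\min\Big\{a+b+c-\alpha-\beta-\gamma \;:\; r_{h.d.}(1/2)\le r,\ 0\le\alpha\le a,\ 0\le\beta\le b,\ 0\le\gamma\le c\Big\},$$ is given by $$d_{QMF}(r)=\begin{cases}\big(\min(a,b)-r\big)^{+}+(c-r)^{+} & \text{if } c>\min(a,b),\\ \big(\min(a,b)+c-2r\big)^{+} & \text{if } c\le\min(a,b).\end{cases}$$
   Context: The $(a,b,c)$-relay channel: source $S$, half-duplex relay $R$ (cannot transmit and receive simultaneously), destination $D$; the source signal is broadcast to $R$ and $D$, and source and relay signals superpose at $D$. Channel gains $h_{sr},h_{rd},h_{sd}$ are i.i.d. $\mathcal{CN}(0,1)$, quasi-static, known only at receivers; average SNRs of S-R, R-D, S-D are $\rho^a,\rho^b,\rho^c$. The exponential orders are $\alpha=\lim_{\rho\to\infty}\frac{\log(1+|h_{sr}|^2\rho^a)}{\log\rho}$ and similarly $\beta,\gamma$ for $|h_{rd}|^2\rho^b$, $|h_{sd}|^2\rho^c$. Multiplexing gain $r=\lim R/\log\rho$, diversity $d=-\lim \log P_e/\log\rho$, $x^+=\max(x,0)$. Static QMF: the relay listens for half of the total duration, quantizes its received signal at the noise level, maps it to a random codeword and transmits it in the second half; the schedule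 is independent of channel realizations. With a relay listening fraction $t$, the QMF rate is within a constant of the half-duplex cut-set expression, whose high-SNR exponent is $r_{h.d.}(t)$, so that the scheme is in outage iff $r_{h.d.}(1/2)\le r$; this yields the optimization formula in the claim. *)

theory Defs
  imports "HOL-Analysis.Analysis"
begin

text \<open>High-SNR exponent of the half-duplex cut-set bound with relay listening fraction t.\<close>
definition r_hd :: "real \<Rightarrow> real \<Rightarrow> real \<Rightarrow> real \<Rightarrow> real" where
  "r_hd t \<alpha> \<beta> \<gamma> = min (t * max \<alpha> \<gamma> + (1 - t) * \<gamma>) (t * \<gamma> + (1 - t) * max \<beta> \<gamma>)"

definition qmf_outage :: "real \<Rightarrow> real \<Rightarrow> real \<Rightarrow> real \<Rightarrow> (real \<times> real \<times> real) set" where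
  "qmf_outage a b c r = {(\<alpha>, \<beta>, \<gamma>). r_hd (1/2) \<alpha> \<beta> \<gamma> \<le> r \<and>
      0 \<le> \<alpha> \<and> \<alpha> \<le> a \<and> 0 \<le> \<beta> \<and> \<beta> \<le> b \<and> 0 \<le> \<gamma> \<and> \<gamma> \<le> c}"

definition d_QMF :: "real \<Rightarrow> real \<Rightarrow> real \<Rightarrow> real \<Rightarrow> real" where
  "d_QMF a b c r = Inf ((\<lambda>(\<alpha>, \<beta>, \<gamma>). a + b + c - \<alpha> - \<beta> - \<gamma>) ` qmf_outage a b c r)"

end

theory Submission
  imports Defs
begin

lemma lb:
  fixes a b c r x y z :: real
  assumes "0 \<le> a" "0 \<le> b" "0 \<le> c" "0 \<le> r"
    and "(x,y,z) \<in> qmf_outage a b c r"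
  shows "(if c > min a b then max (min a b - r) 0 + max (c - r) 0
            else max (min a b + c - 2 * r) 0) \<le> a + b + c - x - y - z"
  using assms unfolding qmf_outage_def r_hd_def
  by (auto simp: min_def max_def split: if_splits)

lemma wit:
  fixes a b c r :: real
  assumes "0 \<le> a" "0 \<le> b" "0 \<le> c" "0 \<le> r"
  shows "\<exists>x y z. (x,y,z) \<in> qmf_outage a b c r \<and> a + b + c - x - y - z =
    (if c > min a b then max (min a b - r) 0 + max (c - r) 0
            else max (min a b + c - 2 * r) 0)"
proof (cases "a \<le> b")
  case True
  show ?thesis
    apply (rule exI[of _ "min a (2*r - min c r)"], rule exI[of _ b], rule exI[of _ "min c r"])
    using assms True unfolding qmf_outage_def r_hd_def
    by (auto simp: min_def max_def field_simps split: if_splits)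
next
  case False
  show ?thesis
    apply (rule exI[of _ a], rule exI[of _ "min b (2*r - min c r)"], rule exI[of _ "min c r"])
    using assms False unfolding qmf_outage_def r_hd_def
    by (auto simp: min_def max_def field_simps split: if_splits)
qed

theorem lemma2:
  fixes a b c r :: real
  assumes "0 \<le> a" "0 \<le> b" "0 \<le> c" "0 \<le> r"
  shows "d_QMF a b c r =
           (if c > min a b then max (min a b - r) 0 + max (c - r) 0
            else max (min a b + c - 2 * r) 0)
         \<and> (\<exists>(\<alpha>, \<beta>, \<gamma>) \<in> qmf_outage a b c r. a + b + c - \<alpha> - \<beta> - \<gamma> = d_QMF a b c r)"
proof -
  define V where "V = (if c > min a b then max (min a b - r) 0 + max (c - r) 0
            else max (min a b + c - 2 * r) 0)"
  obtain x y z where w: "(x,y,z) \<in> qmf_outage a b c r" "a + b + c - x - y - z = V"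
    using wit[OF assms] unfolding V_def by blast
  have "d_QMF a b c r = V"
    unfolding d_QMF_def
  proof (rule cInf_eq_minimum)
    show "V \<in> (\<lambda>(\<alpha>, \<beta>, \<gamma>). a + b + c - \<alpha> - \<beta> - \<gamma>) ` qmf_outage a b c r"
      using w by force
  next
    fix v assume "v \<in> (\<lambda>(\<alpha>, \<beta>, \<gamma>). a + b + c - \<alpha> - \<beta> - \<gamma>) ` qmf_outage a b c r"
    then obtain p q s where "(p,q,s) \<in> qmf_outage a b c r" "v = a + b + c - p - q - s" by auto
    then show "V \<le> v" using lb[OF assms] unfolding V_def by auto
  qed
  moreover have "\<exists>(\<alpha>, \<beta>, \<gamma>) \<in> qmf_outage a b c r. a + b + c - \<alpha> - \<beta> - \<gamma> = d_QMF a b c r"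
    by (rule bexI[OF _ w(1)]) (simp add: w(2) \<open>d_QMF a b c r = V\<close>)
  ultimately show ?thesis unfolding V_def by blast
qed

end
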